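(* For any $n$ and $k$ with $k=o(\sqrt n)$, there exists a binary $k$-batch code of dimension $n$ with redundancy $\mathcal{O}(n^{2/3}k^{5/3})$. In particular, for $0<\epsilon<1/2$, $r_B(n,n^\epsilon)=\mathcal{O}(n^{2/3+5\epsilon/3})$.
   Context: A binary linear code of length $N$ encoding $n$ information bits $x_1,\dots,x_n$ is a $k$-batch code if for every multiset $\{i_1,\dots,i_k\}$ of indices there exist $k$ mutually disjoint sets $R_1,\dots,R_k$ of coordinates such that $x_{i_j}$ is a function of the codeword bits indexed by $R_j$. Its redundancy is $N-n$; $r_B(n,k)$ is the minimum redundancy of a binary $k$-batch code of dimension $n$. *)

theory Defs
  imports Complex_Main "HOL-Library.Landau_Symbols"
begin

text \<open>A binary linear code of length N and dimension n is given by its generator: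
  codeword bit m (for m < N) is the GF(2)-sum (XOR) of the information bits x i, i in G m,
  where G m is a subset of {..<n}.  Every GF(2)-linear map from GF(2)^n to GF(2)^N has this form.\<close>

definition encode :: "(nat \<Rightarrow> nat set) \<Rightarrow> (nat \<Rightarrow> bool) \<Rightarrow> nat \<Rightarrow> bool" where
  "encode G x m = odd (card {i \<in> G m. x i})"

definition linear_code :: "nat \<Rightarrow> nat \<Rightarrow> (nat \<Rightarrow> nat set) \<Rightarrow> bool" where
  "linear_code n N G \<longleftrightarrow> (\<forall>m<N. G m \<subseteq> {..<n})"

definition recoverable_from ::
    "nat \<Rightarrow> (nat \<Rightarrow> nat set) \<Rightarrow> nat set \<Rightarrow> nat \<Rightarrow> bool" where
  "recoverable_from n G R i \<longleftrightarrow>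
     (\<exists>g :: (nat \<Rightarrow> bool) \<Rightarrow> bool. \<forall>x :: nat \<Rightarrow> bool.
        (\<forall>j. j \<ge> n \<longrightarrow> \<not> x j) \<longrightarrow>
        x i = g (\<lambda>m. if m \<in> R then encode G x m else False))"

text \<open>k-batch code: for every multiset of k indices (given as a list idx 0, ..., idx (k-1)
  of indices below n, repetitions allowed) there are k mutually disjoint sets of coordinates
  R 0, ..., R (k-1) such that x (idx j) is a function of the bits indexed by R j.\<close>
definition batch_code :: "nat \<Rightarrow> nat \<Rightarrow> nat \<Rightarrow> (nat \<Rightarrow> nat set) \<Rightarrow> bool" where
  "batch_code n N k G \<longleftrightarrow> linear_code n N G \<and>
     (\<forall>idx :: nat \<Rightarrow> nat. (\<forall>j<k. idx j < n) \<longrightarrow>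
        (\<exists>R :: nat \<Rightarrow> nat set.
           (\<forall>j<k. R j \<subseteq> {..<N}) \<and>
           (\<forall>j<k. \<forall>j'<k. j \<noteq> j' \<longrightarrow> R j \<inter> R j' = {}) \<and>
           (\<forall>j<k. recoverable_from n G (R j) (idx j))))"

definition r_B :: "nat \<Rightarrow> nat \<Rightarrow> nat" where
  "r_B n k = (LEAST r. \<exists>G. batch_code n (n + r) k G)"

end

theory Submission
  imports Defs "HOL-Computational_Algebra.Primes" "HOL-Real_Asymp.Real_Asymp"
begin


lemma multiplicity_le_self_nat:
  fixes p m :: nat assumes "prime p" "m > 0" shows "multiplicity p m \<le> m"
proof -
  have "p ^ multiplicity p m dvd m" by (rule multiplicity_dvd)
  hence "p ^ multiplicity p m \<le> m" using assms(2) by (simp add: dvd_imp_le)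
  moreover have "multiplicity p m < 2 ^ multiplicity p m" by (rule less_exp)
  moreover have "2 ^ multiplicity p m \<le> p ^ multiplicity p m"
    using prime_ge_2_nat[OF assms(1)] by (simp add: power_mono)
  ultimately show ?thesis by linarith
qed

lemma card_filter_eq_sum:
  "finite A \<Longrightarrow> card {i\<in>A. P i} = (\<Sum>i\<in>A. if P i then 1 else (0::nat))"
  by (simp add: sum.inter_filter[symmetric])

lemma legendre_nat:
  fixes p :: nat assumes p: "prime p"
  shows "multiplicity p (fact n) = (\<Sum>i\<in>{1..n}. n div p ^ i)"
proof (induction n)
  case 0
  then show ?case by simp
next
  case (Suc n)
  have p2: "p \<ge> 2" using prime_ge_2_nat[OF p] .
  have pe: "prime_elem p" using p by simp
  have m0: "multiplicity p (Suc n * fact n :: nat) = multiplicity p (Suc n) + multiplicity p (fact n)"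
    by (rule prime_elem_multiplicity_mult_distrib[OF pe]) auto
  have m1: "multiplicity p (fact (Suc n) :: nat) = multiplicity p (Suc n) + multiplicity p (fact n)"
    using m0 by (simp only: fact_Suc of_nat_id)
  have div_step: "Suc n div q = n div q + (if q dvd Suc n then 1 else 0)" if "q > 0" for q :: nat
    using div_Suc[of n q] that by (auto simp: dvd_eq_mod_eq_0)
  have "(\<Sum>i\<in>{1..Suc n}. Suc n div p ^ i) =
        (\<Sum>i\<in>{1..Suc n}. n div p ^ i + (if p ^ i dvd Suc n then 1 else 0))"
    by (rule sum.cong) (use p2 div_step in auto)
  also have "\<dots> = (\<Sum>i\<in>{1..Suc n}. n div p ^ i) + (\<Sum>i\<in>{1..Suc n}. if p ^ i dvd Suc n then 1 else 0)"
    by (simp add: sum.distrib)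
  also have "(\<Sum>i\<in>{1..Suc n}. n div p ^ i) = (\<Sum>i\<in>{1..n}. n div p ^ i)"
  proof -
    have "n < 2 ^ Suc n" using less_exp[of "Suc n"] by simp
    also have "(2::nat) ^ Suc n \<le> p ^ Suc n" by (rule power_mono[OF p2]) simp
    finally have "n div p ^ Suc n = 0" by simp
    thus ?thesis by (simp add: sum.cl_ivl_Suc)
  qed
  also have "(\<Sum>i\<in>{1..Suc n}. if p ^ i dvd Suc n then 1 else (0::nat)) = card {i\<in>{1..Suc n}. p ^ i dvd Suc n}"
    by (rule card_filter_eq_sum[symmetric]) simp
  also have "{i\<in>{1..Suc n}. p ^ i dvd Suc n} = {1..multiplicity p (Suc n)}"
  proof -
    have nu: "\<not> is_unit p" using p2 by simp
    define M where "M = multiplicity p (Suc n)"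
    have mle: "M \<le> Suc n" unfolding M_def using multiplicity_le_self_nat[OF p] by simp
    have iff: "p ^ i dvd Suc n \<longleftrightarrow> i \<le> M" for i
      unfolding M_def using power_dvd_iff_le_multiplicity[of "Suc n" p i] nu by simp
    have "{i\<in>{1..Suc n}. p ^ i dvd Suc n} = {1..M}"
    proof (intro set_eqI iffI)
      fix i assume "i \<in> {i\<in>{1..Suc n}. p ^ i dvd Suc n}"
      thus "i \<in> {1..M}" using iff[of i] by auto
    next
      fix i assume "i \<in> {1..M}"
      thus "i \<in> {i\<in>{1..Suc n}. p ^ i dvd Suc n}" using iff[of i] mle by auto
    qed
    thus ?thesis unfolding M_def .
  qed
  also have "card {1..multiplicity p (Suc n)} = multiplicity p (Suc n)" by simp
  finally have "(\<Sum>i\<in>{1..Suc n}. Suc n div p ^ i) = (\<Sum>i\<in>{1..n}. n div p ^ i) + multiplicity p (Suc n)" .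
  thus ?case using m1 Suc.IH by linarith
qed


lemma div_double_le:
  fixes N q :: nat assumes "q > 0" shows "(2*N) div q \<le> 2 * (N div q) + 1"
proof -
  have "N = N div q * q + N mod q" by simp
  moreover have "N mod q < q" using assms by simp
  ultimately have "N < N div q * q + q" by linarith
  hence "N < (N div q + 1) * q" by (simp add: algebra_simps)
  hence "2*N < (2 * (N div q) + 2) * q" by (simp add: algebra_simps)
  hence "(2*N) div q < 2 * (N div q) + 2" by (rule less_mult_imp_div_less)
  thus ?thesis by simp
qed

lemma binom_mult_bound:
  fixes p N :: nat assumes p: "prime p" and N: "N > 0"
  shows "p ^ multiplicity p ((2*N) choose N) \<le> 2*N"
proof -
  have p2: "p \<ge> 2" using prime_ge_2_nat[OF p] .
  have pe: "prime_elem p" using p by simp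
  define C where "C = (2*N) choose N"
  define v where "v = multiplicity p C"
  have Cpos: "C > 0" unfolding C_def by simp
  have fe: "fact N * fact N * C = (fact (2*N) :: nat)"
    using binomial_fact_lemma[of N "2*N"] unfolding C_def by (simp add: mult_2)
  have fN: "(fact N :: nat) \<noteq> 0" by simp
  have a1: "multiplicity p (fact N * fact N * C) = multiplicity p (fact N * fact N :: nat) + multiplicity p C"
    by (rule prime_elem_multiplicity_mult_distrib[OF pe]; use Cpos fN in auto)
  have a2: "multiplicity p (fact N * fact N :: nat) = multiplicity p (fact N :: nat) + multiplicity p (fact N :: nat)"
    by (rule prime_elem_multiplicity_mult_distrib[OF pe]; use fN in auto)
  have "multiplicity p (fact (2*N) :: nat) = multiplicity p (fact N :: nat) + multiplicity p (fact N :: nat) + v"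
    unfolding v_def fe[symmetric] a1 a2 by simp
  hence eq: "(\<Sum>i\<in>{1..2*N}. (2*N) div p ^ i) = 2 * (\<Sum>i\<in>{1..N}. N div p ^ i) + v"
    by (simp only: legendre_nat[OF p] mult_2)
  have ext: "(\<Sum>i\<in>{1..N}. N div p ^ i) = (\<Sum>i\<in>{1..2*N}. N div p ^ i)"
  proof (rule sum.mono_neutral_left)
    show "\<forall>i\<in>{1..2 * N} - {1..N}. N div p ^ i = 0"
    proof
      fix i assume "i \<in> {1..2 * N} - {1..N}"
      hence "N < i" by auto
      also have "i < 2 ^ i" by (rule less_exp)
      also have "(2::nat) ^ i \<le> p ^ i" using p2 by (simp add: power_mono)
      finally show "N div p ^ i = 0" by simp
    qed
  qed auto
  define T where "T = {i\<in>{1..2*N}. p ^ i \<le> 2*N}"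
  have "(\<Sum>i\<in>{1..2*N}. (2*N) div p ^ i) \<le> (\<Sum>i\<in>{1..2*N}. 2 * (N div p ^ i) + (if p ^ i \<le> 2*N then 1 else 0))"
  proof (rule sum_mono)
    fix i assume "i \<in> {1..2*N}"
    have pi: "p ^ i > 0" using p2 by simp
    show "(2*N) div p ^ i \<le> 2 * (N div p ^ i) + (if p ^ i \<le> 2*N then 1 else 0)"
    proof (cases "p ^ i \<le> 2*N")
      case True thus ?thesis using div_double_le[OF pi, of N] by simp
    next
      case False thus ?thesis by simp
    qed
  qed
  also have "\<dots> = 2 * (\<Sum>i\<in>{1..2*N}. N div p ^ i) + card T"
  proof -
    have cT: "card T = (\<Sum>i\<in>{1..2*N}. if p^i \<le> 2*N then 1 else 0)"
      unfolding T_def by (rule card_filter_eq_sum) simp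
    show ?thesis by (simp only: cT sum.distrib sum_distrib_left)
  qed
  finally have vT: "v \<le> card T" using eq ext by simp
  have "p ^ card T \<le> 2*N"
  proof (cases "T = {}")
    case True thus ?thesis using N by simp
  next
    case False
    have fT: "finite T" unfolding T_def by simp
    define m0 where "m0 = Max T"
    have "m0 \<in> T" unfolding m0_def using fT False by simp
    hence pm0: "p ^ m0 \<le> 2*N" unfolding T_def by simp
    have "T \<subseteq> {1..m0}" unfolding m0_def using fT by (auto simp: T_def)
    hence "card T \<le> card {1..m0}" by (intro card_mono) simp_all
    hence "card T \<le> m0" by simp
    hence "p ^ card T \<le> p ^ m0" using p2 by (simp add: power_increasing)
    thus ?thesis using pm0 by simp
  qed
  moreover have "p ^ v \<le> p ^ card T" using vT p2 by (simp add: power_increasing)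
  ultimately show ?thesis unfolding v_def C_def by simp
qed

lemma prod_subset_prime_factors_le:
  fixes C :: nat assumes "C > 0" "B \<subseteq> prime_factors C"
  shows "\<Prod>B \<le> C"
proof -
  have fin: "finite (prime_factors C)" by simp
  have "\<Prod>B \<le> (\<Prod>p\<in>B. p ^ multiplicity p C)"
  proof (rule prod_mono)
    fix p assume "p \<in> B"
    hence pp: "p \<in> prime_factors C" using assms by auto
    hence "prime p" "p dvd C" by (auto simp: in_prime_factors_iff)
    hence "multiplicity p C \<ge> 1" using assms(1) prime_multiplicity_gt_zero_iff[of p C] by simp
    hence "p ^ 1 \<le> p ^ multiplicity p C" using prime_ge_2_nat[OF \<open>prime p\<close>] by (intro power_increasing) auto
    thus "0 \<le> p \<and> p \<le> p ^ multiplicity p C" by simp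
  qed
  also have "\<dots> \<le> (\<Prod>p\<in>prime_factors C. p ^ multiplicity p C)"
  proof (rule dvd_imp_le)
    show "(\<Prod>p\<in>B. p ^ multiplicity p C) dvd (\<Prod>p\<in>prime_factors C. p ^ multiplicity p C)"
      by (rule prod_dvd_prod_subset[OF fin assms(2)])
    show "0 < (\<Prod>p\<in>prime_factors C. p ^ multiplicity p C)"
      by (rule prod_pos) (auto simp: in_prime_factors_iff prime_gt_0_nat)
  qed
  also have "\<dots> = C" using prod_prime_factors[of C] assms(1) by simp
  finally show ?thesis .
qed


lemma binom_odd_le: "(2*m+1) choose m \<le> 4 ^ m"
proof -
  have "((2*m+1) choose m) + ((2*m+1) choose (m+1)) \<le> (\<Sum>k\<in>{m, m+1}. (2*m+1) choose k)"
    by simp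
  also have "\<dots> \<le> (\<Sum>k\<le>2*m+1. (2*m+1) choose k)"
    by (rule sum_mono2) auto
  also have "\<dots> = 2 ^ (2*m+1)" by (rule choose_row_sum)
  finally have "2 * ((2*m+1) choose m) \<le> 2 * 4 ^ m"
    using binomial_symmetric[of m "2*m+1"] by (simp add: power_mult power_add)
  thus ?thesis by simp
qed

lemma prod_mid_primes_le: "\<Prod>{p::nat. prime p \<and> m+1 < p \<and> p \<le> 2*m+1} \<le> (2*m+1) choose m"
proof (rule prod_subset_prime_factors_le)
  show "0 < (2*m+1) choose m" by simp
  show "{p::nat. prime p \<and> m+1 < p \<and> p \<le> 2*m+1} \<subseteq> prime_factors ((2*m+1) choose m)"
  proof
    fix p assume "p \<in> {p::nat. prime p \<and> m+1 < p \<and> p \<le> 2*m+1}"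
    hence p: "prime p" "m+1 < p" "p \<le> 2*m+1" by auto
    have fe: "fact m * fact (m+1) * ((2*m+1) choose m) = (fact (2*m+1) :: nat)"
      using binomial_fact_lemma[of m "2*m+1"] by (simp add: Suc_diff_le)
    have "p dvd fact (2*m+1)" using p prime_dvd_fact_iff by blast
    hence "p dvd fact m * fact (m+1) * ((2*m+1) choose m)" using fe by simp
    moreover have "\<not> p dvd fact m" using p prime_dvd_fact_iff[of p m] by simp
    moreover have "\<not> p dvd fact (m+1)" using p prime_dvd_fact_iff[of p "m+1"] by simp
    ultimately have "p dvd (2*m+1) choose m" using p(1) by (simp add: prime_dvd_mult_iff)
    thus "p \<in> prime_factors ((2*m+1) choose m)" using p(1) by (intro prime_factorsI) auto
  qed
qed

lemma primorial_le: "\<Prod>{p::nat. prime p \<and> p \<le> x} \<le> 4 ^ x"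
proof (induction x rule: less_induct)
  case (less x)
  consider "x \<le> 1" | "x = 2" | "x > 2" "even x" | "x > 2" "odd x" by linarith
  then show ?case
  proof cases
    case 1
    have "\<not> (prime p \<and> p \<le> x)" for p using prime_ge_2_nat[of p] 1 by auto
    hence e: "{p::nat. prime p \<and> p \<le> x} = {}" by blast
    show ?thesis unfolding e by simp
  next
    case 2
    have "prime p \<and> p \<le> x \<longleftrightarrow> p = 2" for p using prime_ge_2_nat[of p] 2 by auto
    hence e: "{p::nat. prime p \<and> p \<le> x} = {2}" by blast
    show ?thesis unfolding e using 2 by simp
  next
    case 3
    have "\<not> prime x" using 3 prime_odd_nat by blast
    have "prime p \<and> p \<le> x \<longleftrightarrow> prime p \<and> p \<le> x - 1" for p
      using \<open>\<not> prime x\<close> by (cases "p = x") auto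
    hence "{p::nat. prime p \<and> p \<le> x} = {p. prime p \<and> p \<le> x - 1}" by blast
    hence "\<Prod>{p::nat. prime p \<and> p \<le> x} \<le> 4 ^ (x - 1)" using less.IH[of "x - 1"] 3 by simp
    also have "\<dots> \<le> 4 ^ x" by (rule power_increasing) auto
    finally show ?thesis .
  next
    case 4
    from 4(2) obtain m where m0: "x = 2*m+1" by (rule oddE)
    with 4(1) have m: "x = 2*m+1" "m \<ge> 1" by auto
    have un: "{p::nat. prime p \<and> p \<le> x} = {p. prime p \<and> p \<le> m+1} \<union> {p. prime p \<and> m+1 < p \<and> p \<le> 2*m+1}"
      using m by auto
    have "\<Prod>{p::nat. prime p \<and> p \<le> x} = \<Prod>{p. prime p \<and> p \<le> m+1} * \<Prod>{p. prime p \<and> m+1 < p \<and> p \<le> 2*m+1}"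
      unfolding un by (rule prod.union_disjoint) auto
    also have "\<dots> \<le> 4 ^ (m+1) * 4 ^ m"
    proof (rule mult_le_mono)
      show "\<Prod>{p. prime p \<and> p \<le> m+1} \<le> 4 ^ (m+1)" using less.IH[of "m+1"] m by simp
      show "\<Prod>{p. prime p \<and> m+1 < p \<and> p \<le> 2*m+1} \<le> 4 ^ m"
        using prod_mid_primes_le[of m] binom_odd_le[of m] by linarith
    qed
    also have "\<dots> = 4 ^ x" using m by (simp add: power_add[symmetric])
    finally show ?thesis .
  qed
qed



lemma prime_in_interval_nat: "\<exists>x0::nat. \<forall>x\<ge>x0. \<exists>p. prime p \<and> x < p \<and> p \<le> 4*x"
proof -
  have ev: "eventually (\<lambda>y::real. (4*y) powr (2*sqrt y + 2) < 4 powr y) at_top" by real_asymp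
  then obtain y0 where y0: "\<And>y. y \<ge> y0 \<Longrightarrow> (4*y) powr (2*sqrt y + 2) < 4 powr y"
    by (auto simp: eventually_at_top_linorder)
  show ?thesis
  proof (rule exI[of _ "max 1 (nat \<lceil>y0\<rceil>)"], intro allI impI)
    fix x :: nat assume x: "max 1 (nat \<lceil>y0\<rceil>) \<le> x"
    show "\<exists>p. prime p \<and> x < p \<and> p \<le> 4*x"
    proof (rule ccontr)
      assume np: "\<not> (\<exists>p. prime p \<and> x < p \<and> p \<le> 4*x)"
      have x1: "x \<ge> 1" using x by simp
      have xy: "real x \<ge> y0" using x by linarith
      define C where "C = (2*(2*x)) choose (2*x)"
      have Cpos: "C > 0" unfolding C_def by simp
      have low: "4^(2*x) / (2*real (2*x)) \<le> real C"
        using central_binomial_lower_bound[of "2*x"] x1 unfolding C_def by simp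
      have Cdvd: "C dvd fact (4*x)"
      proof -
        have "fact (2*x) * fact (2*(2*x) - 2*x) * C = (fact (2*(2*x)) :: nat)"
          unfolding C_def by (rule binomial_fact_lemma) simp
        hence "fact (4*x) = C * (fact (2*x) * fact (2*(2*x) - 2*x) :: nat)" by (simp add: algebra_simps)
        thus ?thesis by (rule dvdI)
      qed
      have PF: "prime p \<and> p \<le> x" if "p \<in> prime_factors C" for p
      proof -
        have pp: "prime p" "p dvd C" using that by (auto simp: in_prime_factors_iff)
        hence "p dvd fact (4*x)" using Cdvd dvd_trans by blast
        hence "p \<le> 4*x" using prime_dvd_fact_iff[OF pp(1)] by simp
        have "p \<le> x"
        proof (rule ccontr)
          assume "\<not> p \<le> x"
          hence "x < p" by simp
          thus False using np pp(1) \<open>p \<le> 4*x\<close> by blast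
        qed
        thus ?thesis using pp(1) by simp
      qed
      define S1 where "S1 = {p\<in>prime_factors C. p*p \<le> 4*x}"
      define S2 where "S2 = {p\<in>prime_factors C. \<not> p*p \<le> 4*x}"
      have fin1: "finite S1" and fin2: "finite S2" unfolding S1_def S2_def by simp_all
      have un: "prime_factors C = S1 \<union> S2" unfolding S1_def S2_def by auto
      have "C = (\<Prod>p\<in>prime_factors C. p^multiplicity p C)"
        using prod_prime_factors[of C] Cpos by simp
      also have "\<dots> = (\<Prod>p\<in>S1. p^multiplicity p C) * (\<Prod>p\<in>S2. p^multiplicity p C)"
        unfolding un by (rule prod.union_disjoint) (use fin1 fin2 in \<open>auto simp: S1_def S2_def\<close>)
      finally have CS: "C = (\<Prod>p\<in>S1. p^multiplicity p C) * (\<Prod>p\<in>S2. p^multiplicity p C)" .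
      have mb: "p ^ multiplicity p C \<le> 4*x" if "p \<in> prime_factors C" for p
      proof -
        have "prime p" using that by (auto simp: in_prime_factors_iff)
        from binom_mult_bound[OF this, of "2*x"] x1 show ?thesis unfolding C_def by simp
      qed
      have b1: "(\<Prod>p\<in>S1. p^multiplicity p C) \<le> (4*x)^card S1"
      proof -
        have "(\<Prod>p\<in>S1. p^multiplicity p C) \<le> (\<Prod>p\<in>S1. 4*x)"
          by (rule prod_mono) (use mb in \<open>auto simp: S1_def\<close>)
        thus ?thesis by simp
      qed
      have b2: "(\<Prod>p\<in>S2. p^multiplicity p C) \<le> 4^x"
      proof -
        have "(\<Prod>p\<in>S2. p^multiplicity p C) \<le> (\<Prod>p\<in>S2. p)"
        proof (rule prod_mono)
          fix p assume pS: "p \<in> S2"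
          hence pf: "p \<in> prime_factors C" and big: "4*x < p*p" unfolding S2_def by auto
          have p2: "p \<ge> 2" using pf prime_ge_2_nat by (auto simp: in_prime_factors_iff)
          have "multiplicity p C \<le> 1"
          proof (rule ccontr)
            assume "\<not> multiplicity p C \<le> 1"
            hence "p ^ 2 \<le> p ^ multiplicity p C" using p2 by (intro power_increasing) auto
            with mb[OF pf] big show False by (simp add: power2_eq_square)
          qed
          hence "p ^ multiplicity p C \<le> p ^ 1" using p2 by (intro power_increasing) auto
          thus "0 \<le> p ^ multiplicity p C \<and> p ^ multiplicity p C \<le> p" by simp
        qed
        also have "\<dots> \<le> \<Prod>{p::nat. prime p \<and> p \<le> x}"
        proof (rule dvd_imp_le)
          have sub: "S2 \<subseteq> {p::nat. prime p \<and> p \<le> x}" using PF unfolding S2_def by auto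
          show "(\<Prod>p\<in>S2. p) dvd \<Prod>{p::nat. prime p \<and> p \<le> x}"
            by (rule prod_dvd_prod_subset[OF _ sub]) simp
          show "0 < \<Prod>{p::nat. prime p \<and> p \<le> x}"
            by (rule prod_pos) (auto simp: prime_gt_0_nat)
        qed
        also have "\<dots> \<le> 4^x" by (rule primorial_le)
        finally show ?thesis .
      qed
      have cS1: "real (card S1) \<le> 2*sqrt x + 1"
      proof -
        have sub: "S1 \<subseteq> {..nat \<lfloor>2*sqrt x\<rfloor>}"
        proof
          fix p assume "p \<in> S1"
          hence "p*p \<le> 4*x" unfolding S1_def by auto
          hence "real (p*p) \<le> real (4*x)" by (simp only: of_nat_le_iff)
          hence "(real p)^2 \<le> 4 * real x" by (simp add: power2_eq_square)
          hence "real p \<le> sqrt (4 * real x)" by (rule real_le_rsqrt)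
          also have "sqrt (4 * real x) = 2 * sqrt x" by (simp add: real_sqrt_mult)
          finally have "real p \<le> 2 * sqrt x" .
          thus "p \<in> {..nat \<lfloor>2*sqrt x\<rfloor>}" by (simp add: le_nat_floor)
        qed
        have "card S1 \<le> card {..nat \<lfloor>2*sqrt x\<rfloor>}" by (rule card_mono[OF _ sub]) simp
        hence "card S1 \<le> nat \<lfloor>2*sqrt x\<rfloor> + 1" by simp
        hence "real (card S1) \<le> real (nat \<lfloor>2*sqrt x\<rfloor>) + 1" by linarith
        also have "real (nat \<lfloor>2*sqrt x\<rfloor>) \<le> 2*sqrt x"
          by (simp add: of_nat_nat)
        finally show ?thesis by simp
      qed
      have x4: "(1::real) \<le> 4 * real x" using x1 by simp
      have "C \<le> (4*x)^card S1 * 4^x" by (subst CS) (rule mult_le_mono[OF b1 b2])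
      hence "real C \<le> real ((4*x)^card S1 * 4^x)" by (simp only: of_nat_le_iff)
      hence "real C \<le> (4*real x)^card S1 * 4^x" by simp
      also have "(4*real x)^card S1 = (4*real x) powr (real (card S1))"
        using x4 by (simp add: powr_realpow)
      also have "\<dots> \<le> (4*real x) powr (2*sqrt x + 1)"
        by (rule powr_mono[OF cS1 x4])
      finally have up: "real C \<le> (4*real x) powr (2*sqrt x + 1) * 4^x" by simp
      have "4^(2*x) / (4*real x) \<le> (4*real x) powr (2*sqrt x + 1) * 4^x"
        using low up by simp
      hence "4^(2*x) \<le> (4*real x) powr (2*sqrt x + 1) * 4^x * (4*real x)"
        using x4 by (simp add: divide_le_eq)
      also have "\<dots> = (4*real x) powr (2*sqrt x + 2) * 4^x"
      proof -
        have e2: "2*sqrt x + 2 = (2*sqrt x + 1) + 1" by simp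
        have "(4*real x) powr (2*sqrt x + 2) = (4*real x) powr (2*sqrt x + 1) * (4*real x) powr 1"
          unfolding e2 by (rule powr_add)
        also have "(4*real x) powr 1 = 4*real x" using x4 by simp
        finally show ?thesis by (simp only: mult_ac)
      qed
      finally have f4: "(4::real)^(2*x) \<le> (4*real x) powr (2*sqrt x + 2) * 4^x" .
      have e4: "(4::real)^(2*x) = 4^x * 4^x" by (subst mult_2) (rule power_add)
      have "(4::real)^x * 4^x \<le> (4*real x) powr (2*sqrt x + 2) * 4^x"
        using f4 unfolding e4 .
      hence "(4::real)^x \<le> (4*real x) powr (2*sqrt x + 2)" by simp
      moreover have "(4*real x) powr (2*sqrt x + 2) < 4 powr real x" using y0[OF xy] .
      moreover have "(4::real) powr real x = 4 ^ x" by (simp add: powr_realpow)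
      ultimately show False by simp
    qed
  qed
qed

lemma prime_in_real_interval: "\<exists>R>0. \<forall>A::real. A \<ge> 1 \<longrightarrow> (\<exists>p. prime p \<and> A \<le> real p \<and> real p \<le> R*A)"
proof -
  obtain x0 :: nat where x0: "\<And>x. x \<ge> x0 \<Longrightarrow> \<exists>p. prime p \<and> x < p \<and> p \<le> 4*x"
    using prime_in_interval_nat by blast
  obtain p0 :: nat where p0: "prime p0" "p0 > x0" using bigger_prime by blast
  show ?thesis
  proof (intro exI[of _ "max 8 (real p0)"] conjI allI impI)
    show "0 < max 8 (real p0)" by simp
    fix A :: real assume A: "A \<ge> 1"
    show "\<exists>p. prime p \<and> A \<le> real p \<and> real p \<le> max 8 (real p0) * A"
    proof (cases "A \<ge> x0")
      case True
      hence "real x0 \<le> real (nat \<lceil>A\<rceil>)" by linarith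
      hence "nat \<lceil>A\<rceil> \<ge> x0" by (simp only: of_nat_le_iff)
      then obtain p where p: "prime p" "nat \<lceil>A\<rceil> < p" "p \<le> 4 * nat \<lceil>A\<rceil>" using x0 by blast
      have c: "real (nat \<lceil>A\<rceil>) \<le> A + 1" "A \<le> real (nat \<lceil>A\<rceil>)" using A by linarith+
      have "A \<le> real p" using p(2) c by linarith
      moreover have "real p \<le> 8 * A"
      proof -
        have "real p \<le> real (4 * nat \<lceil>A\<rceil>)" using p(3) by (simp only: of_nat_le_iff)
        hence "real p \<le> 4 * real (nat \<lceil>A\<rceil>)" by simp
        thus ?thesis using c A by linarith
      qed
      moreover have "8 * A \<le> max 8 (real p0) * A" using A by (intro mult_right_mono) auto
      ultimately have "A \<le> real p \<and> real p \<le> max 8 (real p0) * A" by linarith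
      thus ?thesis using p(1) by blast
    next
      case False
      have "real x0 < real p0" using p0(2) by (simp only: of_nat_less_iff)
      hence "A \<le> real p0" using False by linarith
      moreover have "real p0 \<le> max 8 (real p0) * A"
      proof -
        have "max 8 (real p0) * 1 \<le> max 8 (real p0) * A" by (rule mult_left_mono) (use A in auto)
        thus ?thesis by simp
      qed
      ultimately have "A \<le> real p0 \<and> real p0 \<le> max 8 (real p0) * A" by blast
      thus ?thesis using p0(1) by blast
    qed
  qed
qed



lemma int_dvd_diff_eq:
  fixes u v p :: nat assumes "int p dvd (int u - int v)" "u < p" "v < p" shows "u = v"
proof (rule ccontr)
  assume "u \<noteq> v"
  hence "int u - int v \<noteq> 0" by simp
  from dvd_imp_le_int[OF this assms(1)] have "int p \<le> \<bar>int u - int v\<bar>" by simp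
  thus False using assms(2,3) by linarith
qed

lemma prime_cancel:
  fixes p t1 t2 :: nat and w :: int
  assumes "prime p" "t1 < p" "t2 < p" "t1 \<noteq> t2" "int p dvd (int t1 - int t2) * w"
  shows "int p dvd w"
proof -
  have pi: "prime (int p)" using assms(1) by simp
  have "\<not> int p dvd (int t1 - int t2)" using int_dvd_diff_eq assms(2-4) by blast
  thus ?thesis using assms(5) prime_dvd_mult_iff[OF pi] by blast
qed

lemma mix_lt: fixes a p X Y :: nat assumes "a < p" "X < Y" shows "a + p*X < p*Y"
proof -
  have "p*(X+1) \<le> p*Y" using assms(2) by (intro mult_le_mono2) simp
  thus ?thesis using assms(1) by (simp add: algebra_simps)
qed

lemma mod_char_int:
  fixes a :: nat and c :: int and p :: nat
  assumes "a < p" "int p dvd (int a - c)"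
  shows "a = nat (c mod int p)"
proof -
  have "int a mod int p = int a" using assms(1) by simp
  moreover have "int a mod int p = c mod int p" using assms(2) by (simp add: mod_eq_dvd_iff)
  ultimately show ?thesis by simp
qed

locale cc =
  fixes n k p :: nat
  assumes pp: "prime p" and k0: "0 < k" and kp: "k \<le> p"
begin

definition px where "px i = i mod p"
definition py where "py i = i div p mod p"
definition pz where "pz i = i div p div p mod p"
definition pc where "pc i = i div p div p div p"

definition lidx where "lidx c t a b = b + p * (a + p * (t + k * c))"
definition lb where "lb l = l mod p"
definition la where "la l = l div p mod p"
definition lt where "lt l = l div p div p mod k"
definition lc where "lc l = l div p div p div k"

definition onL where "onL i l \<longleftrightarrow> pc i = lc l \<and>
   int p dvd (int (la l) + int (lt l) * int (px i) - int (py i)) \<and>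
   int p dvd (int (lb l) + int (lt l)^2 * int (px i) - int (pz i))"

definition lineOf where "lineOf i t = lidx (pc i) t
   (nat ((int (py i) - int t * int (px i)) mod int p))
   (nat ((int (pz i) - int t^2 * int (px i)) mod int p))"

definition cubes where "cubes = n div p div p div p + 1"
definition LL where "LL = cubes * k * p^2"
definition G where "G m = (if m < n then {m} else {i. i < n \<and> onL i (m - n)})"
definition Rs where "Rs i t = insert (n + lineOf i t) {j. j < n \<and> j \<noteq> i \<and> onL j (lineOf i t)}"
definition good where "good i t i' t' \<longleftrightarrow> lineOf i t \<noteq> lineOf i' t' \<and>
   (\<forall>m. onL m (lineOf i t) \<and> onL m (lineOf i' t') \<longrightarrow> m = i \<or> m = i')"

lemma p0: "p > 0" using pp prime_gt_0_nat by blast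

lemma dec:
  assumes "a < p" "b < p" "t < k"
  shows "lb (lidx c t a b) = b" "la (lidx c t a b) = a" "lt (lidx c t a b) = t" "lc (lidx c t a b) = c"
  using assms p0 k0 by (simp_all add: lb_def la_def lt_def lc_def lidx_def)

lemma ldecomp: "l = lidx (lc l) (lt l) (la l) (lb l)"
proof -
  have e1: "l = l mod p + p * (l div p)" by simp
  have e2: "l div p = l div p mod p + p * (l div p div p)" by simp
  have e3: "l div p div p = l div p div p mod k + k * (l div p div p div k)" by simp
  show ?thesis unfolding lidx_def lc_def lt_def la_def lb_def
    using e1 e2 e3 by presburger
qed

lemma pdecomp: "i = px i + p * (py i + p * (pz i + p * pc i))"
proof -
  have e1: "i = i mod p + p * (i div p)" by simp
  have e2: "i div p = i div p mod p + p * (i div p div p)" by simp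
  have e3: "i div p div p = i div p div p mod p + p * (i div p div p div p)" by simp
  show ?thesis unfolding px_def py_def pz_def pc_def
    using e1 e2 e3 by presburger
qed

lemma coords_lt: "px i < p" "py i < p" "pz i < p"
  using p0 by (simp_all add: px_def py_def pz_def)

lemma pt_eq: "px i = px j \<Longrightarrow> py i = py j \<Longrightarrow> pz i = pz j \<Longrightarrow> pc i = pc j \<Longrightarrow> i = j"
  using pdecomp[of i] pdecomp[of j] by metis

lemma nat_mod_lt: "nat (c mod int p) < p"
  using p0 by (simp add: nat_less_iff)

lemma lineOf_dec:
  assumes "t < k"
  shows "lt (lineOf i t) = t" "lc (lineOf i t) = pc i"
    "la (lineOf i t) = nat ((int (py i) - int t * int (px i)) mod int p)"
    "lb (lineOf i t) = nat ((int (pz i) - int t^2 * int (px i)) mod int p)"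
  unfolding lineOf_def using dec[OF nat_mod_lt nat_mod_lt assms] by simp_all

lemma dvd_mod_diff: "int p dvd (c mod int p - c)"
proof -
  have "(c mod int p) mod int p = c mod int p" by simp
  thus ?thesis by (simp only: mod_eq_dvd_iff)
qed

lemma onL_lineOf: assumes "t < k" shows "onL i (lineOf i t)"
proof -
  have m1: "int (nat ((int (py i) - int t * int (px i)) mod int p)) = (int (py i) - int t * int (px i)) mod int p"
    using p0 by simp
  have m2: "int (nat ((int (pz i) - int t^2 * int (px i)) mod int p)) = (int (pz i) - int t^2 * int (px i)) mod int p"
    using p0 by simp
  have d1: "int p dvd ((int (py i) - int t * int (px i)) mod int p + int t * int (px i) - int (py i))"
    using dvd_mod_diff[of "int (py i) - int t * int (px i)"] by (simp add: algebra_simps)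
  have d2: "int p dvd ((int (pz i) - int t^2 * int (px i)) mod int p + int t^2 * int (px i) - int (pz i))"
    using dvd_mod_diff[of "int (pz i) - int t^2 * int (px i)"] by (simp add: algebra_simps)
  show ?thesis unfolding onL_def lineOf_dec[OF assms] m1 m2 using d1 d2 by simp
qed

lemma onL_eq_lineOf:
  assumes "onL i l" shows "lineOf i (lt l) = l"
proof -
  have tk: "lt l < k" unfolding lt_def using k0 by simp
  have la: "la l = nat ((int (py i) - int (lt l) * int (px i)) mod int p)"
    by (rule mod_char_int) (use assms p0 in \<open>auto simp: onL_def la_def algebra_simps\<close>)
  have lb: "lb l = nat ((int (pz i) - int (lt l)^2 * int (px i)) mod int p)"
    by (rule mod_char_int) (use assms p0 in \<open>auto simp: onL_def lb_def algebra_simps\<close>)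
  have lc: "lc l = pc i" using assms by (simp add: onL_def)
  show ?thesis unfolding lineOf_def using ldecomp[of l] la lb lc by simp
qed

lemma two_lines:
  assumes "lt l1 \<noteq> lt l2" "onL j1 l1" "onL j2 l1" "onL j1 l2" "onL j2 l2"
  shows "j1 = j2"
proof -
  define t1 where "t1 = lt l1"
  define t2 where "t2 = lt l2"
  have ltk: "lt l < k" for l unfolding lt_def using k0 by simp
  have t1p: "t1 < p" and t2p: "t2 < p" using ltk[of l1] ltk[of l2] kp unfolding t1_def t2_def by simp_all
  define a1 where "a1 = int (la l1)"
  define a2 where "a2 = int (la l2)"
  define b1 where "b1 = int (lb l1)"
  define X1 where "X1 = int (px j1)"
  define Y1 where "Y1 = int (py j1)"
  define Z1 where "Z1 = int (pz j1)"
  define X2 where "X2 = int (px j2)"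
  define Y2 where "Y2 = int (py j2)"
  define Z2 where "Z2 = int (pz j2)"
  have d1: "int p dvd a1 + int t1 * X1 - Y1" using assms(2) by (simp add: onL_def a1_def t1_def X1_def Y1_def)
  have d2: "int p dvd a1 + int t1 * X2 - Y2" using assms(3) by (simp add: onL_def a1_def t1_def X2_def Y2_def)
  have d3: "int p dvd a2 + int t2 * X1 - Y1" using assms(4) by (simp add: onL_def a2_def t2_def X1_def Y1_def)
  have d4: "int p dvd a2 + int t2 * X2 - Y2" using assms(5) by (simp add: onL_def a2_def t2_def X2_def Y2_def)
  have e1: "int p dvd b1 + int t1^2 * X1 - Z1" using assms(2) by (simp add: onL_def b1_def t1_def X1_def Z1_def)
  have e2: "int p dvd b1 + int t1^2 * X2 - Z2" using assms(3) by (simp add: onL_def b1_def t1_def X2_def Z2_def)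
  have "(int t1 - int t2) * (X1 - X2) = (a1 + int t1 * X1 - Y1) - (a2 + int t2 * X1 - Y1) - (a1 + int t1 * X2 - Y2) + (a2 + int t2 * X2 - Y2)"
    by algebra
  also have "int p dvd \<dots>" by (rule dvd_add[OF dvd_diff[OF dvd_diff[OF d1 d3] d2] d4])
  finally have "int p dvd (int t1 - int t2) * (X1 - X2)" .
  hence "int p dvd (X1 - X2)" using prime_cancel[OF pp t1p t2p] assms(1) unfolding t1_def t2_def by blast
  hence ex: "px j1 = px j2" using int_dvd_diff_eq coords_lt unfolding X1_def X2_def by blast
  have "Y2 - Y1 = (a1 + int t1 * X1 - Y1) - (a1 + int t1 * X2 - Y2)" using ex unfolding X1_def X2_def by simp
  also have "int p dvd \<dots>" by (rule dvd_diff[OF d1 d2])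
  finally have "int p dvd (Y2 - Y1)" .
  hence ey: "py j2 = py j1" using int_dvd_diff_eq coords_lt unfolding Y1_def Y2_def by blast
  have "Z2 - Z1 = (b1 + int t1^2 * X1 - Z1) - (b1 + int t1^2 * X2 - Z2)" using ex unfolding X1_def X2_def by simp
  also have "int p dvd \<dots>" by (rule dvd_diff[OF e1 e2])
  finally have "int p dvd (Z2 - Z1)" .
  hence ez: "pz j2 = pz j1" using int_dvd_diff_eq coords_lt unfolding Z1_def Z2_def by blast
  have ec: "pc j1 = pc j2" using assms(2,3) by (simp add: onL_def)
  show ?thesis using pt_eq[OF ex ey[symmetric] ez[symmetric] ec] .
qed

lemma not_on_two:
  assumes nl: "\<not> onL i l'" and t: "t1 < k" "t2 < k" "t1 \<noteq> t2"
    and j1: "onL j1 (lineOf i t1)" "onL j1 l'" and j2: "onL j2 (lineOf i t2)" "onL j2 l'"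
  shows False
proof -
  have t1p: "t1 < p" and t2p: "t2 < p" using t kp by simp_all
  define t' where "t' = lt l'"
  define a' where "a' = int (la l')"
  define b' where "b' = int (lb l')"
  define X0 where "X0 = int (px i)"
  define Y0 where "Y0 = int (py i)"
  define Z0 where "Z0 = int (pz i)"
  define \<alpha> where "\<alpha> = a' + int t' * X0 - Y0"
  define \<beta> where "\<beta> = b' + int t'^2 * X0 - Z0"
  have key: "int p dvd \<beta> - (int s + int t') * \<alpha>"
    if s: "s < k" and js: "onL j (lineOf i s)" "onL j l'" for s j
  proof -
    define a where "a = int (la (lineOf i s))"
    define b where "b = int (lb (lineOf i s))"
    define X where "X = int (px j)"
    define Y where "Y = int (py j)"
    define Z where "Z = int (pz j)"
    have oi: "onL i (lineOf i s)" by (rule onL_lineOf[OF s])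
    have c1: "int p dvd a + int s * X0 - Y0" using oi lineOf_dec[OF s] by (simp add: onL_def a_def X0_def Y0_def)
    have c2: "int p dvd b + int s^2 * X0 - Z0" using oi lineOf_dec[OF s] by (simp add: onL_def b_def X0_def Z0_def)
    have c3: "int p dvd a + int s * X - Y" using js(1) lineOf_dec[OF s] by (simp add: onL_def a_def X_def Y_def)
    have c4: "int p dvd b + int s^2 * X - Z" using js(1) lineOf_dec[OF s] by (simp add: onL_def b_def X_def Z_def)
    have c5: "int p dvd a' + int t' * X - Y" using js(2) by (simp add: onL_def a'_def t'_def X_def Y_def)
    have c6: "int p dvd b' + int t'^2 * X - Z" using js(2) by (simp add: onL_def b'_def t'_def X_def Z_def)
    have "\<beta> - (int s + int t') * \<alpha> =
        (int s + int t') * ((a + int s * X - Y) - (a + int s * X0 - Y0) - (a' + int t' * X - Y))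
        - ((b + int s^2 * X - Z) - (b + int s^2 * X0 - Z0) - (b' + int t'^2 * X - Z))"
      unfolding \<alpha>_def \<beta>_def by algebra
    also have "int p dvd \<dots>"
      by (rule dvd_diff[OF dvd_mult[OF dvd_diff[OF dvd_diff[OF c3 c1] c5]] dvd_diff[OF dvd_diff[OF c4 c2] c6]])
    finally show ?thesis .
  qed
  have k1: "int p dvd \<beta> - (int t1 + int t') * \<alpha>" by (rule key[OF t(1) j1])
  have k2: "int p dvd \<beta> - (int t2 + int t') * \<alpha>" by (rule key[OF t(2) j2])
  have "(int t1 - int t2) * \<alpha> = (\<beta> - (int t2 + int t') * \<alpha>) - (\<beta> - (int t1 + int t') * \<alpha>)" by algebra
  also have "int p dvd \<dots>" by (rule dvd_diff[OF k2 k1])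
  finally have "int p dvd (int t1 - int t2) * \<alpha>" .
  hence da: "int p dvd \<alpha>" by (rule prime_cancel[OF pp t1p t2p t(3)])
  have "\<beta> = (\<beta> - (int t1 + int t') * \<alpha>) + (int t1 + int t') * \<alpha>" by simp
  hence db: "int p dvd \<beta>" using k1 da by (metis dvd_add dvd_mult)
  have "pc i = lc l'"
  proof -
    have "pc j1 = lc (lineOf i t1)" using j1(1) by (simp add: onL_def)
    moreover have "pc j1 = lc l'" using j1(2) by (simp add: onL_def)
    ultimately show ?thesis using lineOf_dec[OF t(1)] by simp
  qed
  hence "onL i l'" using da db unfolding onL_def \<alpha>_def \<beta>_def a'_def b'_def t'_def X0_def Y0_def Z0_def by simp
  with nl show False by contradiction
qed


lemma ltk: "lt l < k" unfolding lt_def using k0 by simp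

lemma bad_unique:
  assumes t': "t' < k" and t1: "t1 < k" and t2: "t2 < k"
    and b1: "\<not> good i t1 i' t'" and b2: "\<not> good i t2 i' t'"
  shows "t1 = t2"
proof (cases "onL i (lineOf i' t')")
  case True
  have "t = t'" if ts: "t < k" and bt: "\<not> good i t i' t'" for t
  proof (rule ccontr)
    assume ne: "t \<noteq> t'"
    have ltne: "lt (lineOf i t) \<noteq> lt (lineOf i' t')" using lineOf_dec(1)[OF ts] lineOf_dec(1)[OF t'] ne by simp
    have "lineOf i t \<noteq> lineOf i' t'"
    proof
      assume "lineOf i t = lineOf i' t'"
      with ltne show False by simp
    qed
    moreover have "m = i \<or> m = i'" if "onL m (lineOf i t)" "onL m (lineOf i' t')" for m
      using two_lines[OF ltne onL_lineOf[OF ts] that(1) True that(2)] by simp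
    ultimately have "good i t i' t'" unfolding good_def by blast
    with bt show False by contradiction
  qed
  hence "t1 = t'" "t2 = t'" using b1 b2 t1 t2 by blast+
  thus ?thesis by simp
next
  case False
  have wit: "\<exists>m. onL m (lineOf i t) \<and> onL m (lineOf i' t')" if ts: "t < k" and bt: "\<not> good i t i' t'" for t
  proof (cases "lineOf i t = lineOf i' t'")
    case True
    have "onL i (lineOf i t)" by (rule onL_lineOf[OF ts])
    hence "onL i (lineOf i' t')" using True by simp
    with False show ?thesis by contradiction
  next
    case ne: False
    thus ?thesis using bt unfolding good_def by blast
  qed
  show ?thesis
  proof (rule ccontr)
    assume ne: "t1 \<noteq> t2"
    obtain m1 where m1: "onL m1 (lineOf i t1)" "onL m1 (lineOf i' t')" using wit[OF t1 b1] by blast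
    obtain m2 where m2: "onL m2 (lineOf i t2)" "onL m2 (lineOf i' t')" using wit[OF t2 b2] by blast
    show False by (rule not_on_two[OF False t1 t2 ne m1 m2])
  qed
qed

lemma card_bad_le1: assumes "t' < k" shows "card {t. t < k \<and> \<not> good i t i' t'} \<le> 1"
proof -
  have "\<forall>x\<in>{t. t < k \<and> \<not> good i t i' t'}. \<forall>y\<in>{t. t < k \<and> \<not> good i t i' t'}. x = y"
    using bad_unique[OF assms] by blast
  moreover have "finite {t. t < k \<and> \<not> good i t i' t'}" by simp
  ultimately have "card {t. t < k \<and> \<not> good i t i' t'} \<le> Suc 0"
    using card_le_Suc0_iff_eq by blast
  thus ?thesis by simp
qed

lemma greedy: "\<exists>T. \<forall>j<k. T j < k \<and> (\<forall>l<j. good (idx j) (T j) (idx l) (T l))"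
proof -
  have "\<forall>J. J \<le> k \<longrightarrow> (\<exists>T. \<forall>j<J. T j < k \<and> (\<forall>l<j. good (idx j) (T j) (idx l) (T l)))"
  proof (intro allI)
    fix J show "J \<le> k \<longrightarrow> (\<exists>T. \<forall>j<J. T j < k \<and> (\<forall>l<j. good (idx j) (T j) (idx l) (T l)))"
    proof (induction J)
      case 0 show ?case by simp
    next
      case (Suc J)
      show ?case
      proof
        assume SJ: "Suc J \<le> k"
        then obtain T where T: "\<forall>j<J. T j < k \<and> (\<forall>l<j. good (idx j) (T j) (idx l) (T l))"
          using Suc.IH by auto
        define B where "B = (\<Union>l<J. {t. t < k \<and> \<not> good (idx J) t (idx l) (T l)})"
        have "card B \<le> (\<Sum>l<J. card {t. t < k \<and> \<not> good (idx J) t (idx l) (T l)})"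
          unfolding B_def by (rule card_UN_le) simp
        also have "\<dots> \<le> (\<Sum>l<J. 1)"
        proof (rule sum_mono)
          fix l assume "l \<in> {..<J}"
          hence "T l < k" using T by auto
          thus "card {t. t < k \<and> \<not> good (idx J) t (idx l) (T l)} \<le> 1" by (rule card_bad_le1)
        qed
        also have "\<dots> = J" by simp
        finally have cB: "card B < k" using SJ by simp
        have "\<not> {..<k} \<subseteq> B"
        proof
          assume "{..<k} \<subseteq> B"
          hence "card {..<k} \<le> card B" by (intro card_mono) (auto simp: B_def)
          thus False using cB by simp
        qed
        then obtain t where t: "t < k" "t \<notin> B" by auto
        hence tg: "\<forall>l<J. good (idx J) t (idx l) (T l)" unfolding B_def by blast
        show "\<exists>T. \<forall>j<Suc J. T j < k \<and> (\<forall>l<j. good (idx j) (T j) (idx l) (T l))"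
        proof (intro exI[of _ "T(J := t)"] allI impI)
          fix j assume j: "j < Suc J"
          show "(T(J := t)) j < k \<and> (\<forall>l<j. good (idx j) ((T(J := t)) j) (idx l) ((T(J := t)) l))"
          proof (cases "j = J")
            case True thus ?thesis using t tg by simp
          next
            case False
            hence "j < J" using j by simp
            thus ?thesis using T by auto
          qed
        qed
      qed
    qed
  qed
  thus ?thesis by blast
qed

lemma lineOf_lt: assumes "i < n" "t < k" shows "lineOf i t < LL"
proof -
  have c: "pc i < cubes" unfolding pc_def cubes_def using assms(1)
    by (simp add: div_le_mono less_Suc_eq_le)
  have "t + k * pc i < k * cubes"
  proof -
    have "k * (pc i + 1) \<le> k * cubes" using c by (intro mult_le_mono2) simp
    thus ?thesis using assms(2) by (simp add: algebra_simps)
  qed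
  hence "nat ((int (py i) - int t * int (px i)) mod int p) + p * (t + k * pc i) < p * (k * cubes)"
    by (rule mix_lt[OF nat_mod_lt])
  hence "nat ((int (pz i) - int t^2 * int (px i)) mod int p) + p * (nat ((int (py i) - int t * int (px i)) mod int p) + p * (t + k * pc i)) < p * (p * (k * cubes))"
    by (rule mix_lt[OF nat_mod_lt])
  thus ?thesis unfolding lineOf_def lidx_def LL_def by (simp add: power2_eq_square mult_ac)
qed

lemma Rs_disj: assumes "good i t i' t'" shows "Rs i t \<inter> Rs i' t' = {}"
proof -
  have "x \<notin> Rs i' t'" if x: "x \<in> Rs i t" for x
  proof
    assume x': "x \<in> Rs i' t'"
    show False
    proof (cases "x = n + lineOf i t")
      case True
      hence "x \<ge> n" by simp
      hence "x = n + lineOf i' t'" using x' unfolding Rs_def by auto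
      thus False using True assms unfolding good_def by simp
    next
      case False
      hence xa: "x < n" "x \<noteq> i" "onL x (lineOf i t)" using x unfolding Rs_def by auto
      hence "x \<noteq> n + lineOf i' t'" by simp
      hence "x \<noteq> i'" "onL x (lineOf i' t')" using x' unfolding Rs_def by auto
      thus False using xa assms unfolding good_def by blast
    qed
  qed
  thus ?thesis by blast
qed

lemma card_insert_odd:
  assumes "finite S" "i \<notin> S"
  shows "odd (card {j \<in> insert i S. x j}) = (x i \<noteq> odd (card {j\<in>S. x j}))"
proof (cases "x i")
  case True
  hence "{j \<in> insert i S. x j} = insert i {j\<in>S. x j}" by auto
  moreover have "card (insert i {j\<in>S. x j}) = Suc (card {j\<in>S. x j})" using assms by simp
  ultimately show ?thesis using True by simp
next
  case False
  hence "{j \<in> insert i S. x j} = {j\<in>S. x j}" by auto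
  thus ?thesis using False by simp
qed

lemma recov: assumes "i < n" "t < k" shows "recoverable_from n G (Rs i t) i"
proof -
  define l where "l = lineOf i t"
  define S where "S = {j. j < n \<and> j \<noteq> i \<and> onL j l}"
  have RS: "Rs i t = insert (n + l) S" unfolding Rs_def l_def S_def by simp
  have Gl: "G (n + l) = insert i S"
    using assms(1) onL_lineOf[OF assms(2), of i] unfolding G_def S_def l_def by auto
  have finS: "finite S" unfolding S_def by simp
  have iS: "i \<notin> S" unfolding S_def by simp
  show ?thesis unfolding recoverable_from_def
  proof (intro exI[of _ "\<lambda>w. w (n + l) \<noteq> odd (card {j\<in>S. w j})"] allI impI)
    fix x :: "nat \<Rightarrow> bool"
    define w where "w = (\<lambda>m. if m \<in> Rs i t then encode G x m else False)"
    have w1: "w (n + l) = odd (card {j \<in> insert i S. x j})"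
      unfolding w_def RS encode_def Gl by simp
    have w2: "w j = x j" if "j \<in> S" for j
    proof -
      have "j < n" using that unfolding S_def by simp
      hence "G j = {j}" unfolding G_def by simp
      hence "encode G x j = odd (card {m \<in> {j}. x m})" unfolding encode_def by simp
      also have "\<dots> = x j"
      proof -
        have "{m \<in> {j}. x m} = (if x j then {j} else {})" by auto
        thus ?thesis by simp
      qed
      finally show ?thesis unfolding w_def RS using that by simp
    qed
    have ws: "{j\<in>S. w j} = {j\<in>S. x j}" using w2 by auto
    have "(w (n + l) \<noteq> odd (card {j\<in>S. w j})) = x i"
      unfolding w1 card_insert_odd[OF finS iS] ws by blast
    thus "x i = (\<lambda>w. w (n + l) \<noteq> odd (card {j\<in>S. w j}))
            (\<lambda>m. if m \<in> Rs i t then encode G x m else False)"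
      unfolding w_def by simp
  qed
qed

lemma batch: "batch_code n (n + LL) k G"
  unfolding batch_code_def
proof (intro conjI allI impI)
  show "linear_code n (n + LL) G" unfolding linear_code_def G_def by auto
  fix idx :: "nat \<Rightarrow> nat" assume idx: "\<forall>j<k. idx j < n"
  obtain T where T: "\<forall>j<k. T j < k \<and> (\<forall>l<j. good (idx j) (T j) (idx l) (T l))"
    using greedy by blast
  show "\<exists>R. (\<forall>j<k. R j \<subseteq> {..<n + LL}) \<and> (\<forall>j<k. \<forall>j'<k. j \<noteq> j' \<longrightarrow> R j \<inter> R j' = {}) \<and>
         (\<forall>j<k. recoverable_from n G (R j) (idx j))"
  proof (intro exI[of _ "\<lambda>j. Rs (idx j) (T j)"] conjI allI impI)
    fix j assume j: "j < k"
    show "Rs (idx j) (T j) \<subseteq> {..<n + LL}"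
      using lineOf_lt[of "idx j" "T j"] idx T j unfolding Rs_def by auto
    show "recoverable_from n G (Rs (idx j) (T j)) (idx j)"
      using recov idx T j by blast
  next
    fix j j' assume j: "j < k" and j': "j' < k" and ne: "j \<noteq> j'"
    show "Rs (idx j) (T j) \<inter> Rs (idx j') (T j') = {}"
    proof (cases "j' < j")
      case True thus ?thesis using T j Rs_disj by blast
    next
      case False
      hence "j < j'" using ne by simp
      hence "Rs (idx j') (T j') \<inter> Rs (idx j) (T j) = {}" using T j' Rs_disj by blast
      thus ?thesis by blast
    qed
  qed
qed

lemma rB_le: "r_B n k \<le> LL"
  unfolding r_B_def by (rule Least_le) (use batch in blast)

end

lemma rB_bound:
  assumes "prime p" "0 < k" "k \<le> p"
  shows "r_B n k \<le> (n div p div p div p + 1) * k * p^2"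
proof -
  interpret cc n k p using assms by unfold_locales
  show ?thesis using rB_le unfolding LL_def cubes_def .
qed

lemma rB_zero: "r_B n 0 = 0"
proof -
  have "batch_code n (n + 0) 0 (\<lambda>m. {m})"
    unfolding batch_code_def linear_code_def by auto
  hence "\<exists>G. batch_code n (n + 0) 0 G" by blast
  hence "r_B n 0 \<le> 0" unfolding r_B_def by (rule Least_le)
  thus ?thesis by simp
qed



lemma div3_le: "real (n div p div p div p) \<le> real n / real p ^ 3" if "p > 0" for n p :: nat
proof -
  have "n div p div p div p = n div (p*p*p)" by (simp add: div_mult2_eq mult.assoc)
  moreover have "n div (p*p*p) * (p*p*p) \<le> n" by (rule div_times_less_eq_dividend)
  ultimately have "real (n div p div p div p * (p*p*p)) \<le> real n" by (simp only: of_nat_le_iff)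
  hence "real (n div p div p div p) * (real p ^ 3) \<le> real n" by (simp add: power3_eq_cube)
  thus ?thesis using that by (simp add: pos_le_divide_eq)
qed

lemma core_bound:
  fixes n k :: nat and R :: real
  assumes R: "R > 0" and Rp: "\<forall>A::real. A \<ge> 1 \<longrightarrow> (\<exists>p. prime p \<and> A \<le> real p \<and> real p \<le> R*A)"
    and k1: "k \<ge> 1" and kn: "real k \<le> sqrt (real n)"
  shows "real (r_B n k) \<le> (1 + 2 * R^2) * (real n powr (2/3) * real k powr (5/3))"
proof -
  have "1 \<le> real k" using k1 by simp
  hence "1 \<le> sqrt (real n)" using kn by linarith
  hence n1: "real n \<ge> 1" by simp
  define u where "u = real n powr (1/3)"
  define v where "v = real k powr (1/3)"
  have u0: "u > 0" unfolding u_def using n1 by simp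
  have v1: "v \<ge> 1" unfolding v_def by (rule ge_one_powr_ge_zero) (use k1 in simp_all)
  have nu: "real n = u ^ 3" unfolding u_def using n1 by (simp add: powr_powr flip: powr_realpow)
  have kv: "real k = v ^ 3" unfolding v_def using k1 by (simp add: powr_powr flip: powr_realpow)
  have nu2: "real n powr (2/3) = u ^ 2" unfolding u_def using n1 by (simp add: powr_powr flip: powr_realpow)
  have kv5: "real k powr (5/3) = v ^ 5" unfolding v_def using k1 by (simp add: powr_powr flip: powr_realpow)
  have vu: "v^2 \<le> u"
  proof -
    have "real k ^ 2 \<le> sqrt (real n) ^ 2" by (rule power_mono[OF kn]) simp
    also have "sqrt (real n) ^ 2 = real n" by simp
    finally have "(v^3)^2 \<le> u^3" unfolding nu kv .
    moreover have "(v^2)^3 = (v^3)^2" by (metis power_mult mult.commute)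
    ultimately have "(v^2)^3 \<le> u^3" by simp
    thus ?thesis using u0 power_mono_iff[of "v^2" u 3] by simp
  qed
  define A where "A = max (v^3) (u / v^2)"
  have A1: "A \<ge> 1" unfolding A_def using v1 by (simp add: le_max_iff_disj one_le_power)
  obtain p where p: "prime p" "A \<le> real p" "real p \<le> R * A" using Rp A1 by blast
  have ppos: "real p > 0" using A1 p(2) by simp
  have "real k \<le> real p" using p(2) kv unfolding A_def by simp
  hence kp: "k \<le> p" by simp
  have rb: "r_B n k \<le> (n div p div p div p + 1) * k * p^2" by (rule rB_bound[OF p(1)]) (use k1 kp in auto)
  hence "real (r_B n k) \<le> real ((n div p div p div p + 1) * k * p^2)" by (simp only: of_nat_le_iff)
  also have "real ((n div p div p div p + 1) * k * p^2) = (real (n div p div p div p) + 1) * real k * real p ^ 2"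
    by (simp only: of_nat_mult of_nat_add of_nat_1 of_nat_power)
  finally have "real (r_B n k) \<le> (real (n div p div p div p) + 1) * real k * real p ^ 2" .
  also have "\<dots> \<le> (real n / real p ^ 3 + 1) * real k * real p ^ 2"
    using div3_le[of p n] ppos by (intro mult_right_mono) auto
  also have "\<dots> = real k * real n / real p + real k * real p ^ 2"
    using ppos by (simp add: field_simps power3_eq_cube power2_eq_square)
  also have "real k * real n / real p \<le> real k * real n / (u / v^2)"
  proof (rule divide_left_mono)
    show "u / v^2 \<le> real p" using p(2) unfolding A_def by simp
    show "0 \<le> real k * real n" by simp
    show "0 < real p * (u / v^2)" using ppos u0 v1 by simp
  qed
  also have "real k * real n / (u / v^2) = u^2 * v^5"
    unfolding nu kv using u0 v1 by (simp add: field_simps power2_eq_square power3_eq_cube eval_nat_numeral)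
  also have "real k * real p ^ 2 \<le> 2 * R^2 * (u^2 * v^5)"
  proof -
    have "real p ^ 2 \<le> (R * A)^2" using p ppos by (intro power_mono) auto
    also have "(R*A)^2 = R^2 * A^2" by (simp add: power_mult_distrib)
    also have "A^2 \<le> (v^3)^2 + (u/v^2)^2" unfolding A_def by (simp add: max_def)
    finally have pb: "real p ^ 2 \<le> R^2 * ((v^3)^2 + (u/v^2)^2)" using R by (simp add: mult_left_mono)
    have t1: "v^3 * (v^3)^2 \<le> u^2 * v^5"
    proof -
      have "(v^2)^2 \<le> u^2" using vu v1 by (intro power_mono) auto
      moreover have "(v^2)^2 = v^4" by (metis power_mult num_double numeral_times_numeral)
      ultimately have "v^4 \<le> u^2" by simp
      hence "v^4 * v^5 \<le> u^2 * v^5" using v1 by (intro mult_right_mono) auto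
      thus ?thesis by (simp add: power_add[symmetric] power_mult[symmetric])
    qed
    have t2: "v^3 * (u/v^2)^2 \<le> u^2 * v^5"
    proof -
      have "v^3 * (u/v^2)^2 = u^2 / v" using v1 by (simp add: field_simps power2_eq_square power3_eq_cube)
      also have "\<dots> \<le> u^2" using v1 u0 by (simp add: divide_le_eq mult_le_cancel_left1)
      also have "\<dots> \<le> u^2 * v^5"
      proof -
        have "1 \<le> v^5" using v1 by (rule one_le_power)
        from mult_left_mono[OF this, of "u^2"] show ?thesis by simp
      qed
      finally show ?thesis .
    qed
    have "real k * real p ^ 2 \<le> v^3 * (R^2 * ((v^3)^2 + (u/v^2)^2))"
      unfolding kv using pb v1 by (intro mult_left_mono) auto
    also have "\<dots> = R^2 * (v^3 * (v^3)^2 + v^3 * (u/v^2)^2)" by (simp add: algebra_simps)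
    also have "\<dots> \<le> R^2 * (u^2 * v^5 + u^2 * v^5)" using t1 t2 by (intro mult_left_mono) auto
    finally show ?thesis by simp
  qed
  finally have "real (r_B n k) \<le> u^2 * v^5 + 2 * R^2 * (u^2 * v^5)" by simp
  thus ?thesis unfolding nu2 kv5 by (simp add: algebra_simps)
qed



theorem corollary1:
  shows "(\<forall>k :: nat \<Rightarrow> nat.
            (\<lambda>n. real (k n)) \<in> o(\<lambda>n. sqrt (real n)) \<longrightarrow>
            (\<lambda>n. real (r_B n (k n))) \<in> O(\<lambda>n. real n powr (2/3) * real (k n) powr (5/3)))
       \<and> (\<forall>\<epsilon> :: real. 0 < \<epsilon> \<and> \<epsilon> < 1/2 \<longrightarrow>
            (\<lambda>n. real (r_B n (nat \<lfloor>real n powr \<epsilon>\<rfloor>))) \<in> O(\<lambda>n. real n powr (2/3 + 5 * \<epsilon> / 3)))"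
proof -
  obtain R :: real where R: "R > 0" "\<forall>A::real. A \<ge> 1 \<longrightarrow> (\<exists>p. prime p \<and> A \<le> real p \<and> real p \<le> R*A)"
    using prime_in_real_interval by blast
  define C where "C = 1 + 2 * R^2"
  have part1: "(\<lambda>n. real (r_B n (k n))) \<in> O(\<lambda>n. real n powr (2/3) * real (k n) powr (5/3))"
    if ko: "(\<lambda>n. real (k n)) \<in> o(\<lambda>n. sqrt (real n))" for k :: "nat \<Rightarrow> nat"
  proof -
    have ev: "eventually (\<lambda>n. real (k n) \<le> sqrt (real n)) at_top"
      using landau_o.smallD[OF ko zero_less_one] by eventually_elim simp
    show ?thesis
    proof (rule bigoI[where c = C])
      show "eventually (\<lambda>n. norm (real (r_B n (k n))) \<le> C * norm (real n powr (2/3) * real (k n) powr (5/3))) at_top"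
        using ev
      proof eventually_elim
        fix n assume kn: "real (k n) \<le> sqrt (real n)"
        have nn: "norm (real n powr (2/3) * real (k n) powr (5/3)) = real n powr (2/3) * real (k n) powr (5/3)"
          by simp
        show "norm (real (r_B n (k n))) \<le> C * norm (real n powr (2/3) * real (k n) powr (5/3))"
        proof (cases "k n = 0")
          case True
          hence "r_B n (k n) = 0" using rB_zero by simp
          thus ?thesis unfolding C_def by simp
        next
          case False
          hence "k n \<ge> 1" by simp
          from core_bound[OF R this kn] show ?thesis unfolding nn C_def by simp
        qed
      qed
    qed
  qed
  have part2: "(\<lambda>n. real (r_B n (nat \<lfloor>real n powr \<epsilon>\<rfloor>))) \<in> O(\<lambda>n. real n powr (2/3 + 5 * \<epsilon> / 3))"
    if e: "0 < \<epsilon>" "\<epsilon> < 1/2" for \<epsilon> :: real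
  proof -
    define k where "k = (\<lambda>n::nat. nat \<lfloor>real n powr \<epsilon>\<rfloor>)"
    have kle: "real (k n) \<le> real n powr \<epsilon>" for n
    proof -
      have "0 \<le> real n powr \<epsilon>" by simp
      hence "real (nat \<lfloor>real n powr \<epsilon>\<rfloor>) = of_int \<lfloor>real n powr \<epsilon>\<rfloor>" by simp
      also have "\<dots> \<le> real n powr \<epsilon>" by simp
      finally show ?thesis unfolding k_def .
    qed
    have s1: "(\<lambda>n::nat. real n powr \<epsilon>) \<in> o(\<lambda>n. sqrt (real n))"
      using e by real_asymp
    have b1: "(\<lambda>n. real (k n)) \<in> O(\<lambda>n::nat. real n powr \<epsilon>)"
      by (rule bigoI[where c = 1]) (use kle in simp)
    have ko: "(\<lambda>n. real (k n)) \<in> o(\<lambda>n. sqrt (real n))"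
      by (rule landau_o.big_small_trans[OF b1 s1])
    have O1: "(\<lambda>n. real (r_B n (k n))) \<in> O(\<lambda>n. real n powr (2/3) * real (k n) powr (5/3))"
      by (rule part1[OF ko])
    have O2: "(\<lambda>n. real n powr (2/3) * real (k n) powr (5/3)) \<in> O(\<lambda>n. real n powr (2/3 + 5 * \<epsilon> / 3))"
    proof (rule bigoI[where c = 1])
      show "eventually (\<lambda>n. norm (real n powr (2/3) * real (k n) powr (5/3)) \<le> 1 * norm (real n powr (2/3 + 5 * \<epsilon> / 3))) at_top"
      proof (rule always_eventually, intro allI)
        fix n :: nat
        have "real (k n) powr (5/3) \<le> (real n powr \<epsilon>) powr (5/3)"
          by (rule powr_mono2) (use kle in auto)
        also have "\<dots> = real n powr (5 * \<epsilon> / 3)" by (simp add: powr_powr mult.commute)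
        finally have "real n powr (2/3) * real (k n) powr (5/3) \<le> real n powr (2/3) * real n powr (5 * \<epsilon> / 3)"
          by (intro mult_left_mono) auto
        also have "\<dots> = real n powr (2/3 + 5 * \<epsilon> / 3)" by (simp add: powr_add)
        finally show "norm (real n powr (2/3) * real (k n) powr (5/3)) \<le> 1 * norm (real n powr (2/3 + 5 * \<epsilon> / 3))"
          by simp
      qed
    qed
    show ?thesis using landau_o.big_trans[OF O1 O2] unfolding k_def .
  qed
  show ?thesis using part1 part2 by blast
qed

end
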